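(* Let $n\ge2$ and let $A$ be the generalized Cartan matrix of affine type $A_n^{(1)}$: $I=\mathbb Z/(n+1)\mathbb Z$, $a_{\bar i,\bar i}=2$, $a_{\bar i,\overline{i+1}}=a_{\bar i,\overline{i-1}}=-1$, and all other entries $0$. Then the set of quantum roots is exactly $$\mathcal Q(\Phi_+)=\Big\{\textstyle\sum_{t=0}^{l}\alpha_{\overline{k+t}}\ \Big|\ k\in\mathbb Z/(n+1)\mathbb Z,\ 0\le l\le n-1\Big\},$$ i.e. the sums of simple roots over proper nonempty cyclic intervals of $\mathbb Z/(n+1)\mathbb Z$.
   Context: Kac–Moody root datum $(A,X,Y,(\alpha_i)_{i\in I},(\alpha_i^\vee)_{i\in I})$: free $\mathbb Z$-modules $X,Y$ of finite rank with perfect pairing, linearly independent simple roots $(\alpha_i)\subset X$ and coroots $(\alpha_i^\vee)\subset Y$, $\langle\alpha_i^\vee,\alpha_j\rangle=a_{i,j}$. Simple reflections $r_i(x)=x-\langle\alpha_i^\vee,x\rangle\alpha_i$, $r_i(y)=y-\langle y,\alpha_i\rangle\alpha_i^\vee$, $W^v=\langle r_i\rangle$, real roots $\Phi=W^v\{\alpha_i\}$, $\Phi_+=\Phi\cap\bigoplus\mathbb Z_{\ge0}\alpha_i$; coroot $\beta^\vee=w(\alpha_i^\vee)$, $s_\beta=wr_iw^{-1}$ for $\beta=w(\alpha_i)$. $\mathrm{Inv}(w)=\{\alpha\in\Phi_+\mid w\alpha\in\Phi_-\}$; $\beta\in\Phi_+$ is quantum if $\langle\beta^\vee,\gamma\rangle=1$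 for all $\gamma\in\mathrm{Inv}(s_\beta)\setminus\{\beta\}$. *)

theory Defs
  imports Main
begin

text \<open>A Kac-Moody root datum, up to isomorphism: X = Y = Z^m, realised as functions
  nat => int supported in {..<m}, with the standard perfect pairing.\<close>

definition pair :: "nat \<Rightarrow> (nat \<Rightarrow> int) \<Rightarrow> (nat \<Rightarrow> int) \<Rightarrow> int" where
  "pair m y x = (\<Sum>k<m. y k * x k)"

definition refl :: "nat \<Rightarrow> (nat \<Rightarrow> int) \<Rightarrow> (nat \<Rightarrow> int) \<Rightarrow> (nat \<Rightarrow> int) \<Rightarrow> (nat \<Rightarrow> int)" where
  "refl m a av x = (\<lambda>k. x k - pair m av x * a k)"

text \<open>A Weyl group element is given by a word [i1,...,ik] meaning r_i1 ... r_ik.\<close>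
definition actX :: "nat \<Rightarrow> (nat \<Rightarrow> nat \<Rightarrow> int) \<Rightarrow> (nat \<Rightarrow> nat \<Rightarrow> int) \<Rightarrow> nat list \<Rightarrow> (nat \<Rightarrow> int) \<Rightarrow> (nat \<Rightarrow> int)" where
  "actX m \<alpha> \<alpha>v ws x = foldr (\<lambda>i. refl m (\<alpha> i) (\<alpha>v i)) ws x"

definition actY :: "nat \<Rightarrow> (nat \<Rightarrow> nat \<Rightarrow> int) \<Rightarrow> (nat \<Rightarrow> nat \<Rightarrow> int) \<Rightarrow> nat list \<Rightarrow> (nat \<Rightarrow> int) \<Rightarrow> (nat \<Rightarrow> int)" where
  "actY m \<alpha> \<alpha>v ws y = foldr (\<lambda>i. refl m (\<alpha>v i) (\<alpha> i)) ws y"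

definition lin_indep_Z :: "nat set \<Rightarrow> (nat \<Rightarrow> nat \<Rightarrow> int) \<Rightarrow> bool" where
  "lin_indep_Z I v = (\<forall>c :: nat \<Rightarrow> int. (\<forall>k. (\<Sum>i\<in>I. c i * v i k) = 0) \<longrightarrow> (\<forall>i\<in>I. c i = 0))"

definition root_datum :: "nat set \<Rightarrow> nat \<Rightarrow> (nat \<Rightarrow> nat \<Rightarrow> int) \<Rightarrow> (nat \<Rightarrow> nat \<Rightarrow> int) \<Rightarrow> (nat \<Rightarrow> nat \<Rightarrow> int) \<Rightarrow> bool" where
  "root_datum I m A \<alpha> \<alpha>v \<longleftrightarrow> finite I
     \<and> (\<forall>i\<in>I. \<forall>k\<ge>m. \<alpha> i k = 0 \<and> \<alpha>v i k = 0)
     \<and> lin_indep_Z I \<alpha> \<and> lin_indep_Z I \<alpha>v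
     \<and> (\<forall>i\<in>I. \<forall>j\<in>I. pair m (\<alpha>v i) (\<alpha> j) = A i j)"

definition real_roots :: "nat set \<Rightarrow> nat \<Rightarrow> (nat \<Rightarrow> nat \<Rightarrow> int) \<Rightarrow> (nat \<Rightarrow> nat \<Rightarrow> int) \<Rightarrow> (nat \<Rightarrow> int) set" where
  "real_roots I m \<alpha> \<alpha>v = {actX m \<alpha> \<alpha>v w (\<alpha> i) | w i. set w \<subseteq> I \<and> i \<in> I}"

definition pos_roots :: "nat set \<Rightarrow> nat \<Rightarrow> (nat \<Rightarrow> nat \<Rightarrow> int) \<Rightarrow> (nat \<Rightarrow> nat \<Rightarrow> int) \<Rightarrow> (nat \<Rightarrow> int) set" where
  "pos_roots I m \<alpha> \<alpha>v = real_roots I m \<alpha> \<alpha>v \<inter>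
     {x. \<exists>c :: nat \<Rightarrow> int. (\<forall>i\<in>I. 0 \<le> c i) \<and> x = (\<lambda>k. \<Sum>i\<in>I. c i * \<alpha> i k)}"

definition neg_roots :: "nat set \<Rightarrow> nat \<Rightarrow> (nat \<Rightarrow> nat \<Rightarrow> int) \<Rightarrow> (nat \<Rightarrow> nat \<Rightarrow> int) \<Rightarrow> (nat \<Rightarrow> int) set" where
  "neg_roots I m \<alpha> \<alpha>v = real_roots I m \<alpha> \<alpha>v \<inter>
     {x. \<exists>c :: nat \<Rightarrow> int. (\<forall>i\<in>I. c i \<le> 0) \<and> x = (\<lambda>k. \<Sum>i\<in>I. c i * \<alpha> i k)}"

definition Inv :: "nat set \<Rightarrow> nat \<Rightarrow> (nat \<Rightarrow> nat \<Rightarrow> int) \<Rightarrow> (nat \<Rightarrow> nat \<Rightarrow> int) \<Rightarrow> nat list \<Rightarrow> (nat \<Rightarrow> int) set" where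
  "Inv I m \<alpha> \<alpha>v w = {a \<in> pos_roots I m \<alpha> \<alpha>v. actX m \<alpha> \<alpha>v w a \<in> neg_roots I m \<alpha> \<alpha>v}"

text \<open>beta = w(alpha_i), beta^vee = w(alpha_i^vee), s_beta = w r_i w^{-1} (word w @ [i] @ rev w).\<close>
definition quantum :: "nat set \<Rightarrow> nat \<Rightarrow> (nat \<Rightarrow> nat \<Rightarrow> int) \<Rightarrow> (nat \<Rightarrow> nat \<Rightarrow> int) \<Rightarrow> (nat \<Rightarrow> int) \<Rightarrow> bool" where
  "quantum I m \<alpha> \<alpha>v \<beta> \<longleftrightarrow> \<beta> \<in> pos_roots I m \<alpha> \<alpha>v \<and>
     (\<exists>w i. set w \<subseteq> I \<and> i \<in> I \<and> actX m \<alpha> \<alpha>v w (\<alpha> i) = \<beta> \<and>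
        (\<forall>\<gamma> \<in> Inv I m \<alpha> \<alpha>v (w @ [i] @ rev w) - {\<beta>}.
            pair m (actY m \<alpha> \<alpha>v w (\<alpha>v i)) \<gamma> = 1))"

text \<open>Cartan matrix of type A_n^(1), indices I = {0..n} standing for Z/(n+1)Z.\<close>
definition cartan_affA :: "nat \<Rightarrow> nat \<Rightarrow> nat \<Rightarrow> int" where
  "cartan_affA n i j = (if i = j then 2
      else if j = (i + 1) mod (n + 1) \<or> i = (j + 1) mod (n + 1) then -1 else 0)"

end

theory Submission
  imports Defs
begin



lemma pair_diff_right:
  "pair m y (\<lambda>k. x k - a * z k) = pair m y x - a * pair m y z"
  by (simp add: pair_def sum_subtractf sum_distrib_left algebra_simps)

lemma pair_diff_left:
  "pair m (\<lambda>k. y k - a * z k) x = pair m y x - a * pair m z x"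
  by (simp add: pair_def sum_subtractf sum_distrib_left algebra_simps)

lemma refl_refl:
  assumes "pair m av a = 2"
  shows "refl m a av (refl m a av x) = x"
proof -
  have "pair m av (refl m a av x) = - pair m av x"
    unfolding refl_def using assms by (simp add: pair_diff_right)
  then show ?thesis unfolding refl_def by (auto simp: fun_eq_iff algebra_simps refl_def)
qed

lemma pair_comm: "pair m a y = pair m y a"
  unfolding pair_def by (simp add: mult.commute)

lemma pair_refl_refl:
  assumes "pair m av a = 2"
  shows "pair m (refl m av a y) (refl m a av x) = pair m y x"
proof -
  have "refl m av a y = (\<lambda>k. y k - pair m y a * av k)"
    unfolding refl_def by (simp add: pair_comm mult.commute)
  moreover have "refl m a av x = (\<lambda>k. x k - pair m av x * a k)"
    unfolding refl_def by (simp add: mult.commute)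
  moreover have "pair m (\<lambda>k. y k - pair m y a * av k) (\<lambda>k. x k - pair m av x * a k)
     = pair m y x - pair m av x * pair m y a - pair m y a * (pair m av x - pair m av x * pair m av a)"
    by (simp only: pair_diff_left pair_diff_right)
  ultimately show ?thesis using assms by (simp add: algebra_simps)
qed

lemma refl_lin:
  "refl m a av (\<lambda>k. x k - c * z k) = (\<lambda>k. refl m a av x k - c * refl m a av z k)"
  unfolding refl_def by (simp add: pair_diff_right fun_eq_iff algebra_simps)




locale affA =
  fixes n m :: nat and \<alpha> \<alpha>v :: "nat \<Rightarrow> nat \<Rightarrow> int"
  assumes n2: "n \<ge> 2"
    and rd: "root_datum {0..n} m (cartan_affA n) \<alpha> \<alpha>v"
begin

abbreviation "aX \<equiv> actX m \<alpha> \<alpha>v"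
abbreviation "aY \<equiv> actY m \<alpha> \<alpha>v"
abbreviation "A \<equiv> cartan_affA n"

lemma pairA: "i \<le> n \<Longrightarrow> j \<le> n \<Longrightarrow> pair m (\<alpha>v i) (\<alpha> j) = A i j"
  using rd unfolding root_datum_def by auto

lemma Aii: "A i i = 2" by (simp add: cartan_affA_def)
lemma Asym: "A i j = A j i" by (auto simp: cartan_affA_def)

lemma pair2: "i \<le> n \<Longrightarrow> pair m (\<alpha>v i) (\<alpha> i) = 2"
  using pairA Aii by simp

lemma aX_rev: "set w \<subseteq> {0..n} \<Longrightarrow> aX (rev w) (aX w x) = x"
proof (induction w arbitrary: x)
  case Nil then show ?case by (simp add: actX_def)
next
  case (Cons a w)
  have "aX (rev (a # w)) (aX (a # w) x) = aX (rev w) (refl m (\<alpha> a) (\<alpha>v a) (refl m (\<alpha> a) (\<alpha>v a) (aX w x)))"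
    by (simp add: actX_def)
  also have "\<dots> = aX (rev w) (aX w x)" using Cons.prems pair2 refl_refl by simp
  also have "\<dots> = x" using Cons by simp
  finally show ?case .
qed

lemma aX_rev2: "set w \<subseteq> {0..n} \<Longrightarrow> aX w (aX (rev w) x) = x"
  using aX_rev[of "rev w"] by simp

lemma aX_lin: "set w \<subseteq> {0..n} \<Longrightarrow> aX w (\<lambda>k. x k - c * z k) = (\<lambda>k. aX w x k - c * aX w z k)"
proof (induction w)
  case Nil then show ?case by (simp add: actX_def)
next
  case (Cons a w)
  then show ?case by (simp add: actX_def refl_lin)
qed

lemma pair_act: "set w \<subseteq> {0..n} \<Longrightarrow> pair m (aY w y) (aX w x) = pair m y x"
proof (induction w)
  case Nil then show ?case by (simp add: actX_def actY_def)
next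
  case (Cons a w)
  have "pair m (aY (a#w) y) (aX (a#w) x) = pair m (refl m (\<alpha>v a) (\<alpha> a) (aY w y)) (refl m (\<alpha> a) (\<alpha>v a) (aX w x))"
    by (simp add: actX_def actY_def)
  also have "\<dots> = pair m (aY w y) (aX w x)" using Cons.prems pair2 pair_refl_refl by simp
  finally show ?case using Cons by simp
qed

lemma sref: assumes "set w \<subseteq> {0..n}" "i \<le> n"
  shows "aX (w @ [i] @ rev w) x = (\<lambda>k. x k - pair m (aY w (\<alpha>v i)) x * aX w (\<alpha> i) k)"
proof -
  define x' where "x' = aX (rev w) x"
  have "aX (w @ [i] @ rev w) x = aX w (refl m (\<alpha> i) (\<alpha>v i) x')"
    by (simp add: actX_def x'_def)
  also have "\<dots> = aX w (\<lambda>k. x' k - pair m (\<alpha>v i) x' * \<alpha> i k)"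
    by (simp add: refl_def)
  also have "\<dots> = (\<lambda>k. aX w x' k - pair m (\<alpha>v i) x' * aX w (\<alpha> i) k)"
    using aX_lin assms by simp
  also have "aX w x' = x" using aX_rev2 assms x'_def by simp
  also have "pair m (\<alpha>v i) x' = pair m (aY w (\<alpha>v i)) (aX w x')"
    using pair_act assms by simp
  also have "aX w x' = x" using aX_rev2 assms x'_def by simp
  finally show ?thesis .
qed

end



context affA begin

definition vc :: "(nat \<Rightarrow> int) \<Rightarrow> nat \<Rightarrow> int" where "vc c = (\<lambda>k. \<Sum>i\<in>{0..n}. c i * \<alpha> i k)"
definition vcv :: "(nat \<Rightarrow> int) \<Rightarrow> nat \<Rightarrow> int" where "vcv c = (\<lambda>k. \<Sum>i\<in>{0..n}. c i * \<alpha>v i k)"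
definition sg :: "nat \<Rightarrow> nat" where "sg i = (if i = n then 0 else Suc i)"
definition tu :: "nat \<Rightarrow> nat" where "tu i = (if i = 0 then n else i - 1)"
definition Bf :: "(nat \<Rightarrow> int) \<Rightarrow> (nat \<Rightarrow> int) \<Rightarrow> int" where
  "Bf d c = (\<Sum>i\<in>{0..n}. (d i - d (sg i)) * (c i - c (sg i)))"
definition row :: "(nat \<Rightarrow> int) \<Rightarrow> nat \<Rightarrow> int" where "row c i = (\<Sum>j\<in>{0..n}. A i j * c j)"
definition crefl :: "nat \<Rightarrow> (nat \<Rightarrow> int) \<Rightarrow> nat \<Rightarrow> int" where
  "crefl i c = (\<lambda>j. c j - (if j = i then row c i else 0))"
definition cact :: "nat list \<Rightarrow> (nat \<Rightarrow> int) \<Rightarrow> nat \<Rightarrow> int" where "cact w c = foldr crefl w c"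
definition del :: "nat \<Rightarrow> nat \<Rightarrow> int" where "del i = (\<lambda>j. if j = i then 1 else 0)"

lemma pair_vc: "pair m y (vc c) = (\<Sum>j\<in>{0..n}. c j * pair m y (\<alpha> j))"
  unfolding pair_def vc_def
  by (simp add: sum_distrib_left sum_distrib_right mult_ac sum.swap[of _ "{0..n}"])

lemma pair_vcv: "pair m (vcv d) x = (\<Sum>i\<in>{0..n}. d i * pair m (\<alpha>v i) x)"
  unfolding pair_def vcv_def
  by (simp add: sum_distrib_left sum_distrib_right mult_ac sum.swap[of _ "{0..n}"])

lemma sg_le: "i \<le> n \<Longrightarrow> sg i \<le> n" by (simp add: sg_def)
lemma tu_le: "i \<le> n \<Longrightarrow> tu i \<le> n" by (auto simp add: tu_def)
lemma tu_sg: "i \<le> n \<Longrightarrow> tu (sg i) = i" by (simp add: sg_def tu_def)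
lemma sg_tu: "i \<le> n \<Longrightarrow> sg (tu i) = i" using n2 by (auto simp add: sg_def tu_def)

lemma sum_sg: "(\<Sum>i\<in>{0..n}. F (sg i)) = (\<Sum>i\<in>{0..n}. (F i :: int))"
  by (rule sum.reindex_bij_witness[where i = tu and j = sg])
     (auto simp: sg_le tu_le tu_sg sg_tu)

lemma sg_mod: "i \<le> n \<Longrightarrow> (i + 1) mod (n + 1) = sg i"
  by (auto simp: sg_def)

lemma A_expl: assumes "i \<le> n" "j \<le> n"
  shows "A i j = 2 * del i j - del (sg i) j - del (tu i) j"
proof -
  have e1: "(i + 1) mod (n+1) = sg i" "(j + 1) mod (n+1) = sg j" using assms sg_mod by auto
  have e2: "(i = sg j) = (j = tu i)" using assms by (auto simp: sg_def tu_def)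
  have d: "i \<noteq> sg i" "i \<noteq> tu i" "sg i \<noteq> tu i" using assms n2 by (auto simp: sg_def tu_def)
  show ?thesis unfolding cartan_affA_def e1 e2 using d by (auto simp: del_def)
qed

lemma sum_delta_r: "finite S \<Longrightarrow> i \<in> S \<Longrightarrow> (\<Sum>j\<in>S. f j * (if j = i then r else 0)) = f i * (r::int)"
proof -
  assume "finite S" "i \<in> S"
  have "(\<Sum>j\<in>S. f j * (if j = i then r else 0)) = (\<Sum>j\<in>S. if j = i then f j * r else 0)"
    by (rule sum.cong) auto
  then show ?thesis using \<open>finite S\<close> \<open>i \<in> S\<close> by simp
qed

lemma sum_delta_l: "finite S \<Longrightarrow> i \<in> S \<Longrightarrow> (\<Sum>j\<in>S. (if j = i then 1 else 0) * f j) = (f i :: int)"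
proof -
  assume "finite S" "i \<in> S"
  have "(\<Sum>j\<in>S. (if j = i then 1 else 0) * f j) = (\<Sum>j\<in>S. if j = i then f j else 0)"
    by (rule sum.cong) auto
  then show ?thesis using \<open>finite S\<close> \<open>i \<in> S\<close> by simp
qed

lemma row_eq: assumes "i \<le> n" shows "row c i = 2 * c i - c (sg i) - c (tu i)"
proof -
  have "row c i = (\<Sum>j\<in>{0..n}. 2 * (del i j * c j) - del (sg i) j * c j - del (tu i) j * c j)"
    unfolding row_def by (rule sum.cong) (auto simp: A_expl assms algebra_simps)
  also have "\<dots> = 2 * c i - c (sg i) - c (tu i)"
    using assms sg_le tu_le by (simp add: sum_subtractf sum_distrib_left[symmetric] del_def sum_delta_l)
  finally show ?thesis .
qed

lemma pair_vv: "pair m (vcv d) (vc c) = Bf d c"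
proof -
  have "pair m (vcv d) (vc c) = (\<Sum>i\<in>{0..n}. d i * pair m (\<alpha>v i) (vc c))"
    by (rule pair_vcv)
  also have "\<dots> = (\<Sum>i\<in>{0..n}. d i * row c i)"
    unfolding pair_vc row_def
    by (rule sum.cong) (auto simp: pairA mult.commute intro!: sum.cong)
  also have "\<dots> = (\<Sum>i\<in>{0..n}. 2 * (d i * c i) - d i * c (sg i) - d i * c (tu i))"
    by (rule sum.cong) (auto simp: row_eq algebra_simps)
  also have "\<dots> = 2 * (\<Sum>i\<in>{0..n}. d i * c i) - (\<Sum>i\<in>{0..n}. d i * c (sg i)) - (\<Sum>i\<in>{0..n}. d i * c (tu i))"
    by (simp add: sum_subtractf sum_distrib_left)
  also have "(\<Sum>i\<in>{0..n}. d i * c (tu i)) = (\<Sum>i\<in>{0..n}. d (sg i) * c (tu (sg i)))"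
    using sum_sg[of "\<lambda>i. d i * c (tu i)"] by simp
  also have "\<dots> = (\<Sum>i\<in>{0..n}. d (sg i) * c i)"
    by (rule sum.cong) (auto simp: tu_sg)
  also have "Bf d c = (\<Sum>i\<in>{0..n}. d i * c i) - (\<Sum>i\<in>{0..n}. d i * c (sg i)) - (\<Sum>i\<in>{0..n}. d (sg i) * c i) + (\<Sum>i\<in>{0..n}. d (sg i) * c (sg i))"
    unfolding Bf_def by (simp add: sum_subtractf sum.distrib algebra_simps)
  moreover have "(\<Sum>i\<in>{0..n}. d (sg i) * c (sg i)) = (\<Sum>i\<in>{0..n}. d i * c i)"
    using sum_sg[of "\<lambda>i. d i * c i"] by simp
  ultimately show ?thesis by simp
qed

lemma refl_vc: assumes "i \<le> n" shows "refl m (\<alpha> i) (\<alpha>v i) (vc c) = vc (crefl i c)"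
proof -
  have p: "pair m (\<alpha>v i) (vc c) = row c i"
    unfolding pair_vc row_def by (rule sum.cong) (auto simp: pairA assms mult.commute)
  show ?thesis unfolding refl_def p
    using assms by (auto simp: vc_def crefl_def fun_eq_iff algebra_simps sum_subtractf sum_delta_r)
qed

lemma refl_vcv: assumes "i \<le> n" shows "refl m (\<alpha>v i) (\<alpha> i) (vcv c) = vcv (crefl i c)"
proof -
  have p: "pair m (\<alpha> i) (vcv c) = row c i"
    unfolding pair_comm[of m "\<alpha> i"] pair_vcv row_def by (rule sum.cong) (auto simp: pairA assms mult.commute Asym)
  show ?thesis unfolding refl_def p
    using assms by (auto simp: vcv_def crefl_def fun_eq_iff algebra_simps sum_subtractf sum_delta_r)
qed

lemma aX_vc: "set w \<subseteq> {0..n} \<Longrightarrow> aX w (vc c) = vc (cact w c)"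
  by (induction w) (auto simp: actX_def cact_def refl_vc)

lemma aY_vcv: "set w \<subseteq> {0..n} \<Longrightarrow> aY w (vcv c) = vcv (cact w c)"
  by (induction w) (auto simp: actY_def cact_def refl_vcv)

lemma alpha_del: "i \<le> n \<Longrightarrow> \<alpha> i = vc (del i)"
  by (auto simp: vc_def del_def fun_eq_iff sum_delta_l)

lemma alphav_del: "i \<le> n \<Longrightarrow> \<alpha>v i = vcv (del i)"
  by (auto simp: vcv_def del_def fun_eq_iff sum_delta_l)

end



context affA begin

lemma vc_inj: assumes "vc c = vc d" "j \<le> n" shows "c j = d j"
proof -
  have li: "lin_indep_Z {0..n} \<alpha>" using rd by (simp add: root_datum_def)
  have "\<forall>k. (\<Sum>i\<in>{0..n}. (c i - d i) * \<alpha> i k) = 0"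
  proof
    fix k
    have "vc c k = vc d k" using assms by simp
    then show "(\<Sum>i\<in>{0..n}. (c i - d i) * \<alpha> i k) = 0"
      by (simp add: vc_def algebra_simps sum_subtractf)
  qed
  with li assms show ?thesis unfolding lin_indep_Z_def by fastforce
qed

lemma vc_cong: "(\<And>j. j \<le> n \<Longrightarrow> c j = d j) \<Longrightarrow> vc c = vc d"
  unfolding vc_def by (auto intro!: sum.cong)

lemma vc_lin: "vc (\<lambda>j. g j - b * c j) = (\<lambda>k. vc g k - b * vc c k)"
  unfolding vc_def by (auto simp: fun_eq_iff algebra_simps sum_subtractf sum_distrib_left)

lemma Bf_cong1: "(\<And>j. j \<le> n \<Longrightarrow> c j = c' j) \<Longrightarrow> Bf c d = Bf c' d"
  unfolding Bf_def by (auto intro!: sum.cong simp: sg_le)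

lemma Bf_cong2: "(\<And>j. j \<le> n \<Longrightarrow> c j = c' j) \<Longrightarrow> Bf d c = Bf d c'"
  unfolding Bf_def by (auto intro!: sum.cong simp: sg_le)

lemma Bf_sym: "Bf c d = Bf d c"
  unfolding Bf_def by (simp add: mult.commute)

lemma Bf_nonneg: "Bf c c \<ge> 0"
  unfolding Bf_def by (auto intro!: sum_nonneg)

lemma Bf_expand: "Bf (\<lambda>j. g j - c j) (\<lambda>j. g j - c j) = Bf g g - 2 * Bf c g + Bf c c"
proof -
  have "Bf (\<lambda>j. g j - c j) (\<lambda>j. g j - c j) = (\<Sum>i\<in>{0..n}. (g i - g (sg i)) * (g i - g (sg i)) - 2 * ((c i - c (sg i)) * (g i - g (sg i))) + (c i - c (sg i)) * (c i - c (sg i)))"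
    unfolding Bf_def by (rule sum.cong) (auto simp: algebra_simps)
  then show ?thesis unfolding Bf_def by (simp add: sum.distrib sum_subtractf sum_distrib_left)
qed

lemma Bf_shift: "Bf c (\<lambda>j. e j + M) = Bf c e"
  unfolding Bf_def by simp

lemma Bf_zero: assumes "Bf e e = 0" shows "\<And>j. j \<le> n \<Longrightarrow> e j = e 0"
proof -
  have all: "\<forall>i\<in>{0..n}. (e i - e (sg i)) * (e i - e (sg i)) = 0"
    using assms unfolding Bf_def by (subst (asm) sum_nonneg_eq_0_iff) auto
  have st: "\<And>i. i < n \<Longrightarrow> e (Suc i) = e i"
  proof -
    fix i assume "i < n"
    then have "(e i - e (sg i)) * (e i - e (sg i)) = 0" using all by auto
    then show "e (Suc i) = e i" using \<open>i < n\<close> by (simp add: sg_def)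
  qed
  fix j show "j \<le> n \<Longrightarrow> e j = e 0"
    by (induction j) (auto simp: st)
qed

lemma real_rep: assumes "x \<in> real_roots {0..n} m \<alpha> \<alpha>v"
  shows "\<exists>c. x = vc c \<and> Bf c c = 2"
proof -
  obtain w i where wi: "x = aX w (\<alpha> i)" "set w \<subseteq> {0..n}" "i \<in> {0..n}"
    using assms unfolding real_roots_def by auto
  define c where "c = cact w (del i)"
  have x: "x = vc c" using wi aX_vc alpha_del c_def by simp
  have "Bf c c = pair m (vcv c) (vc c)" by (simp add: pair_vv)
  also have "\<dots> = pair m (aY w (vcv (del i))) (aX w (vc (del i)))"
    using wi aX_vc aY_vcv c_def by simp
  also have "\<dots> = pair m (\<alpha>v i) (\<alpha> i)" using pair_act wi alpha_del alphav_del by simp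
  also have "\<dots> = 2" using pair2 wi by simp
  finally show ?thesis using x by blast
qed

lemma pos_rep: assumes "x \<in> pos_roots {0..n} m \<alpha> \<alpha>v"
  shows "\<exists>g. x = vc g \<and> (\<forall>j\<le>n. 0 \<le> g j) \<and> Bf g g = 2"
proof -
  obtain c where c: "x = vc c" "Bf c c = 2" using assms real_rep unfolding pos_roots_def by blast
  obtain g where g: "\<forall>i\<in>{0..n}. 0 \<le> g i" "x = vc g"
    using assms unfolding pos_roots_def vc_def by blast
  have eq: "\<And>j. j \<le> n \<Longrightarrow> c j = g j" using vc_inj c g by metis
  have "Bf g g = 2" using c Bf_cong1[of c g c] Bf_cong2[of c g g] eq by simp
  then show ?thesis using g by auto
qed

lemma neg_rep: assumes "x \<in> neg_roots {0..n} m \<alpha> \<alpha>v" "x = vc h"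
  shows "\<forall>j\<le>n. h j \<le> 0"
proof -
  obtain g where g: "\<forall>i\<in>{0..n}. g i \<le> 0" "x = vc g"
    using assms unfolding neg_roots_def vc_def by blast
  show ?thesis using vc_inj[of g h] g assms by force
qed

lemma pos_intro: "x \<in> real_roots {0..n} m \<alpha> \<alpha>v \<Longrightarrow> x = vc g \<Longrightarrow> \<forall>j\<le>n. 0 \<le> g j \<Longrightarrow> x \<in> pos_roots {0..n} m \<alpha> \<alpha>v"
  unfolding pos_roots_def vc_def by (auto intro!: exI[of _ g])

lemma neg_intro: "x \<in> real_roots {0..n} m \<alpha> \<alpha>v \<Longrightarrow> x = vc g \<Longrightarrow> \<forall>j\<le>n. g j \<le> 0 \<Longrightarrow> x \<in> neg_roots {0..n} m \<alpha> \<alpha>v"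
  unfolding neg_roots_def vc_def by (auto intro!: exI[of _ g])

lemma sref_vc: assumes "set w \<subseteq> {0..n}" "i \<le> n"
  shows "aX (w @ [i] @ rev w) (vc g) = vc (\<lambda>j. g j - Bf (cact w (del i)) g * cact w (del i) j)"
proof -
  have "aY w (\<alpha>v i) = vcv (cact w (del i))" using assms alphav_del aY_vcv by simp
  moreover have "aX w (\<alpha> i) = vc (cact w (del i))" using assms alpha_del aX_vc by simp
  ultimately show ?thesis using sref[OF assms, of "vc g"] by (simp add: pair_vv vc_lin)
qed

lemma aY_coroot: assumes "set w \<subseteq> {0..n}" "i \<le> n"
  shows "pair m (aY w (\<alpha>v i)) (vc g) = Bf (cact w (del i)) g"
  using assms alphav_del aY_vcv pair_vv by simp

lemma aX_root: assumes "set w \<subseteq> {0..n}" "i \<le> n"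
  shows "aX w (\<alpha> i) = vc (cact w (del i))"
  using assms alpha_del aX_vc by simp

end



lemma mod_inj: fixes x y N :: nat
  assumes "x mod N = y mod N" "x \<le> y" "y < x + N" shows "x = y"
proof -
  obtain s where s: "y = x + N * s" using mod_eq_nat2E[OF assms(1,2)] by blast
  show ?thesis proof (cases s)
    case 0 then show ?thesis using s by simp
  next
    case (Suc s') then have "N * s \<ge> N" by simp
    then show ?thesis using s assms(3) by linarith
  qed
qed

context affA begin

definition cint :: "nat \<Rightarrow> nat \<Rightarrow> nat \<Rightarrow> int" where
  "cint k l = (\<lambda>j. \<Sum>t\<le>l. if j = (k + t) mod (n + 1) then 1 else 0)"

lemma S_eq: "(\<lambda>j. \<Sum>t\<le>l. \<alpha> ((k + t) mod (n + 1)) j) = vc (cint k l)"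
proof
  fix j
  have "vc (cint k l) j = (\<Sum>i\<in>{0..n}. \<Sum>t\<le>l. (if i = (k + t) mod (n + 1) then 1 else 0) * \<alpha> i j)"
    unfolding vc_def cint_def by (simp add: sum_distrib_right)
  also have "\<dots> = (\<Sum>t\<le>l. \<Sum>i\<in>{0..n}. (if i = (k + t) mod (n + 1) then 1 else 0) * \<alpha> i j)"
    by (rule sum.swap)
  also have "\<dots> = (\<Sum>t\<le>l. \<alpha> ((k + t) mod (n + 1)) j)"
    by (rule sum.cong) (auto simp: sum_delta_l less_Suc_eq_le[symmetric])
  finally show "(\<Sum>t\<le>l. \<alpha> ((k + t) mod (n + 1)) j) = vc (cint k l) j" by simp
qed

lemma cint_nonneg: "cint k l j \<ge> 0"
  unfolding cint_def by (auto intro: sum_nonneg)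

lemma cint_Suc: "cint k (Suc l) = (\<lambda>j. del (k mod (n+1)) j + cint (k+1) l j)"
  unfolding cint_def del_def by (rule ext, subst sum.atMost_Suc_shift) (simp del: sum.atMost_Suc)

lemma sg_mod2: "sg (x mod (n+1)) = Suc x mod (n+1)"
  by (auto simp: sg_def mod_Suc)

lemma tu_mod: "tu (x mod (n+1)) = (x + n) mod (n+1)"
proof (cases "x mod (n+1) = 0")
  case True
  then have "(x + n) mod (n+1) = n" by (metis add_0 mod_add_left_eq mod_less less_add_one)
  then show ?thesis using True by (simp add: tu_def)
next
  case False
  have "(x + n) mod (n+1) = (x mod (n+1) + n) mod (n+1)" by (simp add: mod_add_left_eq)
  also have "x mod (n+1) + n = (x mod (n+1) - 1) + (n + 1)" using False by simp
  also have "(\<dots>) mod (n+1) = x mod (n+1) - 1"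
    by (metis mod_add_self2 mod_less le_less_trans diff_le_self mod_less_divisor zero_less_Suc add.commute Suc_eq_plus1)
  finally show ?thesis using False by (simp add: tu_def)
qed

lemma cint_v1: assumes "l + 2 \<le> n" shows "cint (k+1) l (k mod (n+1)) = 0"
  unfolding cint_def
proof (rule sum.neutral, rule ballI)
  fix t assume "t \<in> {..l}"
  have "k mod (n+1) \<noteq> (k + 1 + t) mod (n+1)"
  proof
    assume "k mod (n+1) = (k + 1 + t) mod (n+1)"
    then have "k = k + 1 + t" by (rule mod_inj) (use \<open>t \<in> {..l}\<close> assms in auto)
    then show False by simp
  qed
  then show "(if k mod (n + 1) = (k + 1 + t) mod (n + 1) then 1 else 0) = (0::int)" by simp
qed

lemma cint_v2: assumes "l + 2 \<le> n" shows "cint (k+1) l (Suc k mod (n+1)) = 1"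
proof -
  have "\<And>t. t \<le> l \<Longrightarrow> (Suc k mod (n+1) = (k + 1 + t) mod (n+1)) = (t = 0)"
  proof -
    fix t assume t: "t \<le> l"
    show "(Suc k mod (n+1) = (k + 1 + t) mod (n+1)) = (t = 0)"
    proof
      assume "Suc k mod (n+1) = (k + 1 + t) mod (n+1)"
      then have "Suc k = k + 1 + t" by (rule mod_inj) (use t assms in auto)
      then show "t = 0" by simp
    qed simp
  qed
  then have "cint (k+1) l (Suc k mod (n+1)) = (\<Sum>t\<le>l. if t = 0 then 1 else 0)"
    unfolding cint_def by (intro sum.cong) auto
  also have "\<dots> = 1" by simp
  finally show ?thesis .
qed

lemma cint_v3: assumes "l + 2 \<le> n" shows "cint (k+1) l ((k + n) mod (n+1)) = 0"
  unfolding cint_def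
proof (rule sum.neutral, rule ballI)
  fix t assume "t \<in> {..l}"
  have "(k + 1 + t) mod (n+1) \<noteq> (k + n) mod (n+1)"
  proof
    assume "(k + 1 + t) mod (n+1) = (k + n) mod (n+1)"
    then have "k + 1 + t = k + n" by (rule mod_inj) (use \<open>t \<in> {..l}\<close> assms in auto)
    then show False using \<open>t \<in> {..l}\<close> assms by simp
  qed
  then show "(if (k + n) mod (n + 1) = (k + 1 + t) mod (n + 1) then 1 else 0) = (0::int)" by auto
qed

lemma cint_zero: assumes "l + 1 \<le> n" shows "cint k l ((k + n) mod (n+1)) = 0"
  unfolding cint_def
proof (rule sum.neutral, rule ballI)
  fix t assume "t \<in> {..l}"
  have "(k + t) mod (n+1) \<noteq> (k + n) mod (n+1)"
  proof
    assume "(k + t) mod (n+1) = (k + n) mod (n+1)"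
    then have "k + t = k + n" by (rule mod_inj) (use \<open>t \<in> {..l}\<close> assms in auto)
    then show False using \<open>t \<in> {..l}\<close> assms by simp
  qed
  then show "(if (k + n) mod (n + 1) = (k + t) mod (n + 1) then 1 else 0) = (0::int)" by auto
qed

lemma cact_int: "l + 1 \<le> n \<Longrightarrow>
   cact (map (\<lambda>t. (k + t) mod (n + 1)) [0..<l]) (del ((k + l) mod (n + 1))) = cint k l"
proof (induction l arbitrary: k)
  case 0
  then show ?case by (simp add: cact_def cint_def del_def fun_eq_iff)
next
  case (Suc l)
  have IH: "cact (map (\<lambda>t. (k + 1 + t) mod (n + 1)) [0..<l]) (del ((k + 1 + l) mod (n + 1))) = cint (k+1) l"
    using Suc.IH[of "Suc k"] Suc.prems by simp
  have "cact (map (\<lambda>t. (k + t) mod (n + 1)) [0..<Suc l]) (del ((k + Suc l) mod (n + 1)))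
     = crefl (k mod (n+1)) (cact (map (\<lambda>t. (k + 1 + t) mod (n + 1)) [0..<l]) (del ((k + 1 + l) mod (n + 1))))"
    by (simp del: upt_Suc add: map_upt_Suc cact_def)
  also have "\<dots> = crefl (k mod (n+1)) (cint (k+1) l)" using IH by simp
  also have "\<dots> = cint k (Suc l)"
  proof -
    have r: "row (cint (k+1) l) (k mod (n+1)) = -1"
      using row_eq[of "k mod (n+1)" "cint (k+1) l"] sg_mod2 tu_mod cint_v1 cint_v2 cint_v3 Suc.prems
      by simp
    show ?thesis unfolding cint_Suc crefl_def r by (auto simp: fun_eq_iff del_def)
  qed
  finally show ?case .
qed

end



lemma walk0: fixes f :: "nat \<Rightarrow> int"
  shows "(\<Sum>t<N. (f t - f (Suc t))^2) = 0 \<Longrightarrow> t \<le> N \<Longrightarrow> f t = f 0"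
proof (induction N arbitrary: t)
  case 0 then show ?case by simp
next
  case (Suc N)
  have nn: "(\<Sum>t<N. (f t - f (Suc t))^2) \<ge> 0" by (simp add: sum_nonneg)
  have "(\<Sum>t<N. (f t - f (Suc t))^2) + (f N - f (Suc N))^2 = 0" using Suc.prems by simp
  moreover have "(f N - f (Suc N))^2 \<ge> 0" by simp
  ultimately have a: "(\<Sum>t<N. (f t - f (Suc t))^2) = 0" and b: "(f N - f (Suc N))^2 = 0"
    using nn by linarith+
  show ?case
  proof (cases "t \<le> N")
    case True show ?thesis by (rule Suc.IH[OF a True])
  next
    case False then have "t = Suc N" using Suc.prems by simp
    then show ?thesis using b Suc.IH[OF a, of N] by simp
  qed
qed

lemma sq_ge1: fixes x :: int shows "x \<noteq> 0 \<Longrightarrow> x^2 \<ge> 1"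
proof -
  assume "x \<noteq> 0"
  then have "\<bar>x\<bar> \<ge> 1" by simp
  then have "1 * 1 \<le> \<bar>x\<bar> * \<bar>x\<bar>" by (intro mult_mono) auto
  then show ?thesis by (simp add: power2_eq_square)
qed

lemma walk1: fixes f :: "nat \<Rightarrow> int"
  shows "f 0 = 1 \<Longrightarrow> f N = 0 \<Longrightarrow> (\<Sum>t<N. (f t - f (Suc t))^2) = 1 \<Longrightarrow>
   \<exists>e<N. \<forall>t\<le>N. f t = (if t \<le> e then 1 else 0)"
proof (induction N arbitrary: f)
  case 0 then show ?case by simp
next
  case (Suc N)
  have sp: "(f 0 - f 1)^2 + (\<Sum>t<N. (f (Suc t) - f (Suc (Suc t)))^2) = 1"
    using Suc.prems(3) by (simp only: sum.lessThan_Suc_shift) simp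
  have nn: "(\<Sum>t<N. (f (Suc t) - f (Suc (Suc t)))^2) \<ge> 0" by (simp add: sum_nonneg)
  show ?case
  proof (cases "f 1 = 1")
    case True
    then obtain e where e: "e < N" "\<forall>t\<le>N. f (Suc t) = (if t \<le> e then 1 else 0)"
      using Suc.IH[of "\<lambda>t. f (Suc t)"] sp Suc.prems by auto
    have "\<forall>t\<le>Suc N. f t = (if t \<le> Suc e then 1 else 0)"
    proof (intro allI impI)
      fix t assume "t \<le> Suc N"
      then show "f t = (if t \<le> Suc e then 1 else 0)" using e Suc.prems(1)
        by (cases t) auto
    qed
    then show ?thesis using e by auto
  next
    case False
    then have "(f 0 - f 1)^2 \<ge> 1" using Suc.prems(1) sq_ge1[of "f 0 - f 1"] by simp
    then have z: "(\<Sum>t<N. (f (Suc t) - f (Suc (Suc t)))^2) = 0" using sp nn by linarith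
    have c: "f (Suc t) = f 1" if "t \<le> N" for t
    proof -
      have "f (Suc t) = (\<lambda>t. f (Suc t)) 0" by (rule walk0[OF z that])
      then show ?thesis by simp
    qed
    have "f 1 = 0" using c[of N] Suc.prems(2) by simp
    have c0: "f (Suc t) = 0" if "t \<le> N" for t using c[OF that] \<open>f 1 = 0\<close> by simp
    have "\<forall>t\<le>Suc N. f t = (if t \<le> 0 then 1 else 0)"
    proof (intro allI impI)
      fix t assume "t \<le> Suc N"
      then show "f t = (if t \<le> 0 then 1 else 0)" using c0 Suc.prems(1)
        by (cases t) auto
    qed
    then show ?thesis by auto
  qed
qed

lemma walk2: fixes f :: "nat \<Rightarrow> int"
  shows "f 0 = 0 \<Longrightarrow> f N = 0 \<Longrightarrow> (\<forall>t\<le>N. f t \<ge> 0) \<Longrightarrow> (\<Sum>t<N. (f t - f (Suc t))^2) = 2 \<Longrightarrow>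
   \<exists>s e. 1 \<le> s \<and> s \<le> e \<and> e < N \<and> (\<forall>t\<le>N. f t = (if s \<le> t \<and> t \<le> e then 1 else 0))"
proof (induction N arbitrary: f)
  case 0 then show ?case by simp
next
  case (Suc N)
  have sp: "(f 0 - f 1)^2 + (\<Sum>t<N. (f (Suc t) - f (Suc (Suc t)))^2) = 2"
    using Suc.prems(4) by (simp only: sum.lessThan_Suc_shift) simp
  have nn: "(\<Sum>t<N. (f (Suc t) - f (Suc (Suc t)))^2) \<ge> 0" by (simp add: sum_nonneg)
  show ?case
  proof (cases "f 1 = 0")
    case True
    then obtain s e where e: "1 \<le> s" "s \<le> e" "e < N" "\<forall>t\<le>N. f (Suc t) = (if s \<le> t \<and> t \<le> e then 1 else 0)"
      using Suc.IH[of "\<lambda>t. f (Suc t)"] sp Suc.prems by auto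
    have "\<forall>t\<le>Suc N. f t = (if Suc s \<le> t \<and> t \<le> Suc e then 1 else 0)"
    proof (intro allI impI)
      fix t assume "t \<le> Suc N"
      then show "f t = (if Suc s \<le> t \<and> t \<le> Suc e then 1 else 0)" using e Suc.prems(1)
        by (cases t) auto
    qed
    then show ?thesis using e by (intro exI[of _ "Suc s"] exI[of _ "Suc e"]) auto
  next
    case False
    have "f 1 \<ge> 0" using Suc.prems(3) by auto
    then have f1: "f 1 \<ge> 1" using False by simp
    have "(f 0 - f 1)^2 = (f 1)^2" using Suc.prems(1) by simp
    have "(f 1)^2 \<le> 2" using sp nn \<open>(f 0 - f 1)^2 = (f 1)^2\<close> by linarith
    have "f 1 < 2"
    proof (rule ccontr)
      assume "\<not> f 1 < 2"
      then have "2 * 2 \<le> f 1 * f 1" by (intro mult_mono) auto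
      then show False using \<open>(f 1)^2 \<le> 2\<close> by (simp add: power2_eq_square)
    qed
    then have "f 1 = 1" using f1 by simp
    then have r: "(\<Sum>t<N. (f (Suc t) - f (Suc (Suc t)))^2) = 1" using sp Suc.prems(1) by simp
    obtain e where e: "e < N" "\<forall>t\<le>N. f (Suc t) = (if t \<le> e then 1 else 0)"
      using walk1[of "\<lambda>t. f (Suc t)" N] \<open>f 1 = 1\<close> Suc.prems(2) r by auto
    have "\<forall>t\<le>Suc N. f t = (if 1 \<le> t \<and> t \<le> Suc e then 1 else 0)"
    proof (intro allI impI)
      fix t assume "t \<le> Suc N"
      then show "f t = (if 1 \<le> t \<and> t \<le> Suc e then 1 else 0)" using e Suc.prems(1)
        by (cases t) auto
    qed
    then show ?thesis using e by (intro exI[of _ 1] exI[of _ "Suc e"]) auto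
  qed
qed




lemma delta_count: fixes t s l :: nat
  shows "(\<Sum>t'\<le>l. if t = s + t' then 1 else 0) = (if s \<le> t \<and> t \<le> s + l then 1 else (0::int))"
proof (cases "s \<le> t \<and> t \<le> s + l")
  case True
  have e: "\<And>t'. (t = s + t') = (t' = t - s)" using True by arith
  have "(\<Sum>t'\<le>l. if t = s + t' then 1 else (0::int)) = (\<Sum>t'\<le>l. if t' = t - s then 1 else 0)"
    by (simp only: e)
  also have "\<dots> = 1" using True by (simp add: le_diff_conv)
  finally show ?thesis by (simp only: if_P[OF True])
next
  case False
  have "\<forall>t'\<in>{..l}. (if t = s + t' then 1 else (0::int)) = 0" using False by auto
  then have "(\<Sum>t'\<le>l. if t = s + t' then 1 else (0::int)) = 0" by (rule sum.neutral)
  then show ?thesis by (simp only: if_not_P[OF False])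
qed

context affA begin

lemma struct: assumes c0: "\<forall>j\<le>n. c j \<ge> 0" and c2: "Bf c c = 2"
  shows "\<exists>k l M. k \<le> n \<and> l \<le> n - 1 \<and> M \<ge> 0 \<and> (\<forall>j\<le>n. c j = M + cint k l j)"
proof -
  define M where "M = Min (c ` {0..n})"
  have "M \<in> c ` {0..n}" unfolding M_def by (rule Min_in) auto
  then obtain p where p: "p \<le> n" "c p = M" by auto
  have Mle: "\<And>j. j \<le> n \<Longrightarrow> M \<le> c j" unfolding M_def by (rule Min_le) auto
  define N where "N = n + 1"
  define \<phi> where "\<phi> t = (p + t) mod N" for t
  have phin: "\<phi> t \<le> n" for t unfolding \<phi>_def N_def
    by (metis Suc_eq_plus1 less_Suc_eq_le mod_less_divisor zero_less_Suc)
  have inj: "inj_on \<phi> {..<N}"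
  proof (rule inj_onI)
    fix x y assume xy: "x \<in> {..<N}" "y \<in> {..<N}" "\<phi> x = \<phi> y"
    show "x = y"
    proof (cases "x \<le> y")
      case True
      have h1: "(p + x) mod N = (p + y) mod N" using xy(3) unfolding \<phi>_def .
      have h2: "p + y < p + x + N" using xy(2) by simp
      have "p + x = p + y" by (rule mod_inj[OF h1 _ h2]) (use True in simp)
      then show ?thesis by simp
    next
      case False
      have h1: "(p + y) mod N = (p + x) mod N" using xy(3) unfolding \<phi>_def by simp
      have h2: "p + x < p + y + N" using xy(1) by simp
      have "p + y = p + x" by (rule mod_inj[OF h1 _ h2]) (use False in simp)
      then show ?thesis by simp
    qed
  qed
  have img: "\<phi> ` {..<N} = {0..n}"
  proof (rule card_subset_eq)
    show "\<phi> ` {..<N} \<subseteq> {0..n}" using phin by auto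
    show "card (\<phi> ` {..<N}) = card {0..n}" using card_image[OF inj] N_def by simp
  qed simp
  have bij: "bij_betw \<phi> {..<N} {0..n}" using inj img by (simp add: bij_betw_def)
  define f where "f t = c (\<phi> t) - M" for t
  have sgphi: "sg (\<phi> t) = \<phi> (Suc t)" for t unfolding \<phi>_def N_def using sg_mod2[of "p+t"] by simp
  have "(\<Sum>t<N. (f t - f (Suc t))^2) = (\<Sum>t<N. (\<lambda>i. (c i - c (sg i)) * (c i - c (sg i))) (\<phi> t))"
    unfolding f_def by (rule sum.cong) (auto simp: sgphi power2_eq_square)
  also have "\<dots> = Bf c c" unfolding Bf_def by (rule sum.reindex_bij_betw[OF bij])
  finally have fs: "(\<Sum>t<N. (f t - f (Suc t))^2) = 2" using c2 by simp
  have f0: "f 0 = 0" unfolding f_def \<phi>_def N_def using p by simp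
  have "(p + N) mod N = p mod N" by simp
  also have "p mod N = p" using p(1) N_def by simp
  finally have fN: "f N = 0" unfolding f_def \<phi>_def using p by simp
  have fnn: "\<forall>t\<le>N. f t \<ge> 0" unfolding f_def using Mle phin by auto
  obtain s e where se: "1 \<le> s" "s \<le> e" "e < N" "\<forall>t\<le>N. f t = (if s \<le> t \<and> t \<le> e then 1 else 0)"
    using walk2[OF f0 fN fnn fs] by blast
  define k where "k = (p + s) mod N"
  define l where "l = e - s"
  have kn: "k \<le> n" unfolding k_def using phin \<phi>_def by simp
  have ln: "l \<le> n - 1" unfolding l_def using se N_def by simp
  have M0: "M \<ge> 0" using c0 p by auto
  have "\<forall>j\<le>n. c j = M + cint k l j"
  proof (intro allI impI)
    fix j assume "j \<le> n"
    then obtain t where t: "t < N" "j = \<phi> t" using img by force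
    have ft: "c (\<phi> t) - M = (if s \<le> t \<and> t \<le> e then 1 else 0)"
      using se(4) t(1) unfolding f_def by (metis less_imp_le)
    have "c j = M + (c (\<phi> t) - M)" using t(2) by simp
    also note ft
    finally have cj: "c j = M + (if s \<le> t \<and> t \<le> e then 1 else 0)" .
    have eqv: "\<And>t'. t' \<le> l \<Longrightarrow> (j = (k + t') mod (n + 1)) = (t = s + t')"
    proof -
      fix t' assume t': "t' \<le> l"
      have "(k + t') mod (n+1) = (p + s + t') mod N" unfolding k_def N_def by (simp add: mod_add_left_eq)
      then have "(j = (k + t') mod (n + 1)) = ((p + t) mod N = (p + (s + t')) mod N)"
        using t unfolding \<phi>_def by (simp add: add.assoc)
      also have "\<dots> = (t = s + t')"
      proof
        assume h: "(p + t) mod N = (p + (s + t')) mod N"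
        have b: "s + t' < N" using t' se unfolding l_def by simp
        show "t = s + t'"
        proof (cases "t \<le> s + t'")
          case True
          have h2: "p + (s + t') < p + t + N" using b by simp
          have "p + t = p + (s + t')" by (rule mod_inj[OF h _ h2]) (use True in simp)
          then show ?thesis by simp
        next
          case False
          have h2: "p + t < p + (s + t') + N" using t(1) by simp
          have "p + (s + t') = p + t" by (rule mod_inj[OF h[symmetric] _ h2]) (use False in simp)
          then show ?thesis by simp
        qed
      qed simp
      finally show "(j = (k + t') mod (n + 1)) = (t = s + t')" .
    qed
    have pw: "\<forall>t'\<in>{..l}. (if j = (k + t') mod (n + 1) then (1::int) else 0) = (if t = s + t' then 1 else 0)"
    proof
      fix t' assume "t' \<in> {..l}"
      then have "t' \<le> l" by simp
      from eqv[OF this] show "(if j = (k + t') mod (n + 1) then (1::int) else 0) = (if t = s + t' then 1 else 0)"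
        by (simp only:)
    qed
    have "cint k l j = (\<Sum>t'\<le>l. if t = s + t' then 1 else 0)"
      unfolding cint_def by (rule sum.cong[OF refl]) (use pw in blast)
    also have "\<dots> = (if s \<le> t \<and> t \<le> s + l then 1 else 0)" by (rule delta_count)
    also have "s + l = e" using se l_def by simp
    finally show "c j = M + cint k l j" using cj by simp
  qed
  then show ?thesis using kn ln M0 by blast
qed

end



context affA begin

lemma Bf_root: assumes "set w \<subseteq> {0..n}" "i \<le> n"
  shows "Bf (cact w (del i)) (cact w (del i)) = 2"
proof -
  define c where "c = cact w (del i)"
  have "Bf c c = pair m (vcv c) (vc c)" by (simp add: pair_vv)
  also have "\<dots> = pair m (aY w (vcv (del i))) (aX w (vc (del i)))"
    using assms aX_vc aY_vcv c_def by simp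
  also have "\<dots> = pair m (\<alpha>v i) (\<alpha> i)" using pair_act assms alpha_del alphav_del by simp
  also have "\<dots> = 2" using pair2 assms by simp
  finally show ?thesis using c_def by simp
qed

definition wint :: "nat \<Rightarrow> nat \<Rightarrow> nat list" where
  "wint k l = map (\<lambda>t. (k + t) mod (n + 1)) [0..<l]"
definition iint :: "nat \<Rightarrow> nat \<Rightarrow> nat" where
  "iint k l = (k + l) mod (n + 1)"

lemma mod_le_n: "x mod (n+1) \<le> n"
  by (metis Suc_eq_plus1 less_Suc_eq_le mod_less_divisor zero_less_Suc)

lemma wint_set: "set (wint k l) \<subseteq> {0..n}"
  unfolding wint_def using mod_le_n by auto

lemma iint_le: "iint k l \<le> n" unfolding iint_def using mod_le_n by simp

lemma int_root: assumes "l \<le> n - 1"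
  shows "aX (wint k l) (\<alpha> (iint k l)) = vc (cint k l)"
    and "cact (wint k l) (del (iint k l)) = cint k l"
proof -
  have l1: "l + 1 \<le> n" using assms n2 by simp
  show c: "cact (wint k l) (del (iint k l)) = cint k l"
    unfolding wint_def iint_def using cact_int[OF l1] by simp
  show "aX (wint k l) (\<alpha> (iint k l)) = vc (cint k l)"
    using aX_root[OF wint_set iint_le] c by simp
qed

lemma int_real: assumes l: "l \<le> n - 1" shows "vc (cint k l) \<in> real_roots {0..n} m \<alpha> \<alpha>v"
proof -
  have eq: "vc (cint k l) = aX (wint k l) (\<alpha> (iint k l))" using int_root(1)[OF l] by simp
  show ?thesis unfolding real_roots_def
    by (rule CollectI, rule exI[of _ "wint k l"], rule exI[of _ "iint k l"])
       (use eq wint_set iint_le in simp)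
qed

lemma int_pos: "l \<le> n - 1 \<Longrightarrow> vc (cint k l) \<in> pos_roots {0..n} m \<alpha> \<alpha>v"
  using int_real cint_nonneg pos_intro by blast

lemma quantum_int: assumes l: "l \<le> n - 1"
  shows "quantum {0..n} m \<alpha> \<alpha>v (vc (cint k l))"
  unfolding quantum_def
proof (intro conjI exI[of _ "wint k l"] exI[of _ "iint k l"] ballI)
  show "vc (cint k l) \<in> pos_roots {0..n} m \<alpha> \<alpha>v" using int_pos l .
  show "set (wint k l) \<subseteq> {0..n}" by (rule wint_set)
  show "iint k l \<in> {0..n}" using iint_le by simp
  show "aX (wint k l) (\<alpha> (iint k l)) = vc (cint k l)" using int_root(1) l .
  define w where "w = wint k l"
  define i where "i = iint k l"
  define c where "c = cint k l"
  have cw: "cact w (del i) = c" using int_root(2) l w_def i_def c_def by simp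
  have ws: "set w \<subseteq> {0..n}" "i \<le> n" using wint_set iint_le w_def i_def by auto
  have cc: "Bf c c = 2" using Bf_root[OF ws] cw by simp
  fix \<gamma> assume \<gamma>: "\<gamma> \<in> Inv {0..n} m \<alpha> \<alpha>v (wint k l @ [iint k l] @ rev (wint k l)) - {vc (cint k l)}"
  then have gp: "\<gamma> \<in> pos_roots {0..n} m \<alpha> \<alpha>v" and gneg: "aX (w @ [i] @ rev w) \<gamma> \<in> neg_roots {0..n} m \<alpha> \<alpha>v"
    and gne: "\<gamma> \<noteq> vc c"
    unfolding Inv_def w_def i_def c_def by auto
  obtain g where g: "\<gamma> = vc g" "\<forall>j\<le>n. 0 \<le> g j" "Bf g g = 2" using pos_rep[OF gp] by blast
  define b where "b = Bf c g"
  have eqs: "aX (w @ [i] @ rev w) \<gamma> = vc (\<lambda>j. g j - b * c j)"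
    using sref_vc[OF ws, of g] g cw b_def by simp
  have hh: "vc (\<lambda>j. g j - b * c j) \<in> neg_roots {0..n} m \<alpha> \<alpha>v" using gneg eqs by simp
  have h: "\<forall>j\<le>n. g j - b * c j \<le> 0" by (rule neg_rep[OF hh refl])
  have pr: "pair m (aY w (\<alpha>v i)) \<gamma> = b" using aY_coroot[OF ws, of g] g cw b_def by simp
  have c0: "\<And>j. c j \<ge> 0" using cint_nonneg c_def by simp
  have b1: "b \<ge> 1"
  proof (rule ccontr)
    assume "\<not> b \<ge> 1"
    then have "b \<le> 0" by simp
    have "\<forall>j\<le>n. g j = 0"
    proof (intro allI impI)
      fix j assume j: "j \<le> n"
      have "b * c j \<le> 0" using \<open>b \<le> 0\<close> c0[of j] by (simp add: mult_nonpos_nonneg)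
      moreover have "g j - b * c j \<le> 0" using h j by simp
      moreover have "g j \<ge> 0" using g(2) j by simp
      ultimately show "g j = 0" by linarith
    qed
    then have "Bf g g = Bf (\<lambda>_. 0) (\<lambda>_. 0)"
      using Bf_cong1[of g "\<lambda>_. 0" g] Bf_cong2[of g "\<lambda>_. 0" "\<lambda>_. 0"] by simp
    also have "\<dots> = 0" by (simp add: Bf_def)
    finally show False using g by simp
  qed
  have ex: "Bf (\<lambda>j. g j - c j) (\<lambda>j. g j - c j) = 4 - 2 * b"
    using Bf_expand[of g c] g cc b_def by simp
  have b2: "b \<le> 2" using Bf_nonneg[of "\<lambda>j. g j - c j"] ex by simp
  have "b \<noteq> 2"
  proof
    assume "b = 2"
    then have z: "Bf (\<lambda>j. g j - c j) (\<lambda>j. g j - c j) = 0" using ex by simp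
    have const: "g j - c j = g 0 - c 0" if "j \<le> n" for j using Bf_zero[OF z that] by simp
    define p where "p = (k + n) mod (n+1)"
    have pn: "p \<le> n" using mod_le_n p_def by simp
    have cp: "c p = 0" using cint_zero[of l k] l n2 c_def p_def by simp
    have "g p \<le> 0" using h[rule_format, OF pn] cp \<open>b = 2\<close> by simp
    then have "g p = 0" using g(2)[rule_format, OF pn] by simp
    then have "g 0 - c 0 = 0" using const[OF pn] cp by simp
    then have gc: "g j = c j" if "j \<le> n" for j
    proof -
      have "g j - c j = g 0 - c 0" by (rule const[OF that])
      with \<open>g 0 - c 0 = 0\<close> show ?thesis by linarith
    qed
    then have "\<And>j. j \<le> n \<Longrightarrow> g j = c j" .
    then have "vc g = vc c" by (rule vc_cong)
    then show False using gne g by simp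
  qed
  then have "b = 1" using b1 b2 by simp
  then show "pair m (aY (wint k l) (\<alpha>v (iint k l))) \<gamma> = 1" using pr w_def i_def by simp
qed

end



context affA begin

lemma quantum_sub: assumes q: "quantum {0..n} m \<alpha> \<alpha>v \<beta>"
  shows "\<exists>k l. \<beta> = vc (cint k l) \<and> k \<le> n \<and> l \<le> n - 1"
proof -
  obtain w i where wi: "set w \<subseteq> {0..n}" "i \<in> {0..n}" "aX w (\<alpha> i) = \<beta>"
    and cond: "\<forall>\<gamma> \<in> Inv {0..n} m \<alpha> \<alpha>v (w @ [i] @ rev w) - {\<beta>}. pair m (aY w (\<alpha>v i)) \<gamma> = 1"
    and bp: "\<beta> \<in> pos_roots {0..n} m \<alpha> \<alpha>v"
    using q unfolding quantum_def by blast
  have ws: "set w \<subseteq> {0..n}" "i \<le> n" using wi by auto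
  define c where "c = cact w (del i)"
  have bc: "\<beta> = vc c" using aX_root[OF ws] wi c_def by simp
  have cc: "Bf c c = 2" using Bf_root[OF ws] c_def by simp
  obtain g where g: "\<beta> = vc g" "\<forall>j\<le>n. 0 \<le> g j" using pos_rep[OF bp] by blast
  have c0: "\<forall>j\<le>n. 0 \<le> c j" using g vc_inj[of c g] bc by force
  obtain k l M where klM: "k \<le> n" "l \<le> n - 1" "M \<ge> 0" "\<forall>j\<le>n. c j = M + cint k l j"
    using struct[OF c0 cc] by blast
  show ?thesis
  proof (cases "M = 0")
    case True
    then have "vc c = vc (cint k l)" using klM by (intro vc_cong) simp
    then show ?thesis using bc klM by blast
  next
    case False
    then have Mp: "M > 0" using klM by simp
    define e where "e = cint k l"
    define \<gamma> where "\<gamma> = vc e"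
    have gp: "\<gamma> \<in> pos_roots {0..n} m \<alpha> \<alpha>v" using int_pos klM \<gamma>_def e_def by simp
    have "Bf c c = Bf c (\<lambda>j. e j + M)" using klM e_def by (intro Bf_cong2) simp
    then have ce: "Bf c e = 2" using cc Bf_shift by simp
    have sg: "aX (w @ [i] @ rev w) \<gamma> = vc (\<lambda>j. e j - 2 * c j)"
      using sref_vc[OF ws, of e] ce c_def \<gamma>_def by simp
    have "aX (w @ [i] @ rev w) \<gamma> = aX ((w @ [i] @ rev w) @ wint k l) (\<alpha> (iint k l))"
      using int_root(1)[of l k] klM \<gamma>_def e_def by (simp add: actX_def)
    moreover have "set ((w @ [i] @ rev w) @ wint k l) \<subseteq> {0..n}" using ws wint_set by auto
    ultimately have "aX (w @ [i] @ rev w) \<gamma> \<in> real_roots {0..n} m \<alpha> \<alpha>v"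
      unfolding real_roots_def using iint_le by fastforce
    moreover have "\<forall>j\<le>n. e j - 2 * c j \<le> 0"
    proof (intro allI impI)
      fix j assume "j \<le> n"
      then have "c j = M + e j" using klM e_def by simp
      moreover have "e j \<ge> 0" using cint_nonneg e_def by simp
      ultimately show "e j - 2 * c j \<le> 0" using Mp by simp
    qed
    ultimately have gneg: "aX (w @ [i] @ rev w) \<gamma> \<in> neg_roots {0..n} m \<alpha> \<alpha>v"
      using sg neg_intro by blast
    have "\<gamma> \<noteq> \<beta>"
    proof
      assume "\<gamma> = \<beta>"
      then have "e 0 = c 0" using vc_inj[of e c 0] bc \<gamma>_def by simp
      then show False using klM Mp e_def by force
    qed
    then have "\<gamma> \<in> Inv {0..n} m \<alpha> \<alpha>v (w @ [i] @ rev w) - {\<beta>}"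
      unfolding Inv_def using gp gneg by simp
    then have "pair m (aY w (\<alpha>v i)) \<gamma> = 1" using cond by blast
    moreover have "pair m (aY w (\<alpha>v i)) \<gamma> = 2" using aY_coroot[OF ws, of e] ce c_def \<gamma>_def by simp
    ultimately show ?thesis by simp
  qed
qed

lemma main: "{\<beta>. quantum {0..n} m \<alpha> \<alpha>v \<beta>} =
    {(\<lambda>j. \<Sum>t\<le>l. \<alpha> ((k + t) mod (n + 1)) j) | k l. k \<le> n \<and> l \<le> n - 1}"
proof (intro set_eqI iffI)
  fix x assume "x \<in> {\<beta>. quantum {0..n} m \<alpha> \<alpha>v \<beta>}"
  then obtain k l where kl: "x = vc (cint k l)" "k \<le> n" "l \<le> n - 1" using quantum_sub by blast
  have "x = (\<lambda>j. \<Sum>t\<le>l. \<alpha> ((k + t) mod (n + 1)) j)" unfolding kl(1) by (rule S_eq[symmetric])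
  then show "x \<in> {(\<lambda>j. \<Sum>t\<le>l. \<alpha> ((k + t) mod (n + 1)) j) | k l. k \<le> n \<and> l \<le> n - 1}"
    using kl by blast
next
  fix x assume "x \<in> {(\<lambda>j. \<Sum>t\<le>l. \<alpha> ((k + t) mod (n + 1)) j) | k l. k \<le> n \<and> l \<le> n - 1}"
  then obtain k l where kl: "x = (\<lambda>j. \<Sum>t\<le>l. \<alpha> ((k + t) mod (n + 1)) j)" "l \<le> n - 1" by blast
  have "x = vc (cint k l)" unfolding kl(1) by (rule S_eq)
  then show "x \<in> {\<beta>. quantum {0..n} m \<alpha> \<alpha>v \<beta>}" using quantum_int kl by simp
qed

end

theorem proposition2p32:
  fixes n m :: nat and \<alpha> \<alpha>v :: "nat \<Rightarrow> nat \<Rightarrow> int"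
  assumes "n \<ge> 2"
    and "root_datum {0..n} m (cartan_affA n) \<alpha> \<alpha>v"
  shows "{\<beta>. quantum {0..n} m \<alpha> \<alpha>v \<beta>} =
    {(\<lambda>j. \<Sum>t\<le>l. \<alpha> ((k + t) mod (n + 1)) j) | k l. k \<le> n \<and> l \<le> n - 1}"
proof -
  interpret affA n m \<alpha> \<alpha>v using assms by unfold_locales
  show ?thesis by (rule main)
qed



end
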